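(* Let $A\in\mathbb{R}^{n\times n}$, $B\in\mathbb{R}^{n\times m}$ be (unknown) matrices of the system $\Sigma:\ \dot x=Ax+Bu,\ y=x$, with $x\in X\subset\mathbb{R}^n$, $u\in U\subset\mathbb{R}^m$. Let $T\in\mathbb{N}^+$ and data matrices $\mathcal U_{0,T}\in\mathbb{R}^{m\times T}$, $\mathcal X_{0,T},\mathcal X_{1,T},\bar{\mathcal X}_{0,T},\bar{\mathcal X}_{1,T}\in\mathbb{R}^{n\times T}$ satisfy $\mathcal X_{1,T}=A\mathcal X_{0,T}+B\mathcal U_{0,T}$ and $\bar{\mathcal X}_{1,T}=A\bar{\mathcal X}_{0,T}$, with $\mathcal X_{0,T},\bar{\mathcal X}_{0,T}$ of full row rank; let $\bar Q\in\mathbb{R}^{T\times n}$ satisfy $\bar{\mathcal X}_{0,T}\bar Q=\mathds{I}_n$. Suppose there exist $\hat\kappa>0$ and matrices $\mathcal H\in\mathbb{R}^{T\times n}$, $\hat A\in\mathbb{R}^{\hat n\times\hat n}$, $\Xi\in\mathbb{R}^{m\times\hat n}$, $\Theta\in\mathbb{R}^{n\times\hat n}$ such that (i) $\mathcal X_{0,T}\mathcal H=P^{-1}$ for some symmetric $P\succ0$; (ii) with $Q:=\mathcal H P$ (so $\mathcal X_{0,T}Q=\mathds{I}_n$), the matrix $\mathcal U_{0,T}Q$ has full row rank and, writing $B_{\mathrm{d}}:=(\mathcal X_{1,T}Q-\bar{\mathcal X}_{1,T}\bar Q)(\mathcal U_{0,T}Q)^\dagger$, one has $\bar{\mathcal X}_{1,T}\bar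 Q\,\Theta=\Theta\hat A-B_{\mathrm{d}}\Xi$; (iii) $\mathcal H^\top\mathcal X_{1,T}^\top+\mathcal X_{1,T}\mathcal H\preceq-\hat\kappa\,\mathcal X_{0,T}\mathcal H$. Let $\hat B\in\mathbb{R}^{\hat n\times\hat m}$ be arbitrary, $\Psi\in\mathbb{R}^{m\times\hat m}$ arbitrary, $\hat C=\Theta$, and consider the reduced-order model $\hat\Sigma:\ \dot{\hat x}=\hat A\hat x+\hat B\hat u,\ \hat y=\hat C\hat x$, with $\hat x\in\hat X\subset\mathbb{R}^{\hat n}$, $\hat u\in\hat U\subset\mathbb{R}^{\hat m}$, and the interface map $u=\mathcal U_{0,T}Q(x-\Theta\hat x)+\Xi\hat x+\Psi\hat u$. Then for any $\varepsilon$ with $0<\varepsilon<\hat\kappa$, the function $\mathcal V(x,\hat x)=(x-\Theta\hat x)^\top P(x-\Theta\hat x)$ is a simulation function from $\hat\Sigma$ to $\Sigma$ with $\alpha=\lambda_{\min}(P)$, $\kappa=\hat\kappa-\varepsilon$ and $\rho=\frac1\varepsilon\big\|\sqrt P\,(B_{\mathrm d}\Psi-\Theta\hat B)\big\|^2$; specifically, $\alpha\|x-\hat C\hat x\|^2\le\mathcal V(x,\hat x)$ for all $x\in X,\hat x\in\hat X$, and for all $x\in X,\hat x\in\hat X,\hat u\in\hat U$, with $u$ given by the interface map, $$\partial_x\mathcal V(x,\hat x)(Ax+Bu)+\partial_{\hat x}\mathcal V(x,\hat x)(\hat A\hat x+\hat B\hat u)\le-\kappa\mathcal V(x,\hat x)+\rho\|\hat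 u\|^2.$$
   Context: A simulation function (SF) from $\hat\Sigma$ to $\Sigma$ is $\mathcal V:X\times\hat X\to\mathbb{R}_0^+$ for which there are $\alpha,\kappa,\rho>0$ with $\alpha\|y-\hat y\|^2\le\mathcal V(x,\hat x)$ for all $x,\hat x$ (where $y=x$, $\hat y=\hat C\hat x$), and for all $x,\hat x,\hat u$ there is $u$ with $\mathsf L\mathcal V(x,\hat x)\le-\kappa\mathcal V(x,\hat x)+\rho\|\hat u\|^2$, where $\mathsf L\mathcal V$ is the Lie derivative along $(Ax+Bu,\hat A\hat x+\hat B\hat u)$. The data $\mathcal X_{0,T},\mathcal X_{1,T},\mathcal U_{0,T}$ are samples of state, state derivative and input along one trajectory; $\bar{\mathcal X}_{0,T},\bar{\mathcal X}_{1,T}$ along a second trajectory with zero input. $M^\dagger$ is the right pseudoinverse of a full-row-rank matrix $M$ ($MM^\dagger=\mathds I$); $\sqrt P$ is the symmetric positive definite square root; $\lambda_{\min}$ is the smallest eigenvalue; $\|\cdot\|$ is the Euclidean norm / induced matrix norm. *)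

theory Defs
  imports "HOL-Analysis.Analysis"
begin

definition full_row_rank :: "real^'c^'r \<Rightarrow> bool" where
  "full_row_rank M \<longleftrightarrow> rank M = CARD('r)"

definition sym_pos_def :: "real^'n^'n \<Rightarrow> bool" where
  "sym_pos_def P \<longleftrightarrow> transpose P = P \<and> (\<forall>x. x \<noteq> 0 \<longrightarrow> x \<bullet> (P *v x) > 0)"

definition loewner_le :: "real^'n^'n \<Rightarrow> real^'n^'n \<Rightarrow> bool" where
  "loewner_le M N \<longleftrightarrow> (\<forall>x. x \<bullet> (M *v x) \<le> x \<bullet> (N *v x))"

definition right_pinv :: "real^'c^'r \<Rightarrow> real^'r^'c" where
  "right_pinv M = transpose M ** matrix_inv (M ** transpose M)"

definition mat_sqrt :: "real^'n^'n \<Rightarrow> real^'n^'n" where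
  "mat_sqrt P = (THE S. sym_pos_def S \<and> S ** S = P)"

text \<open>Smallest eigenvalue (of a symmetric matrix; its eigenvalues are real).\<close>
definition lambda_min :: "real^'n^'n \<Rightarrow> real" where
  "lambda_min P = Min {l. \<exists>v. v \<noteq> 0 \<and> P *v v = l *\<^sub>R v}"

definition mat_norm :: "real^'c^'r \<Rightarrow> real" where
  "mat_norm M = onorm (\<lambda>x. M *v x)"

end

theory Submission
  imports Defs
begin

lemma sym_dot:
  fixes M :: "real^'n^'n"
  assumes "transpose M = M"
  shows "(M *v x) \<bullet> y = x \<bullet> (M *v y)"
proof -
  have "x \<bullet> (M *v y) = (x v* M) \<bullet> y" by (simp add: dot_lmul_matrix)
  also have "x v* M = transpose M *v x" by simp
  finally show ?thesis using assms by simp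
qed

lemma quad_zero_lemma:
  fixes a d :: real
  assumes "a \<ge> 0" "\<forall>t. 0 \<le> 2*t*a + t^2*d"
  shows "a = 0"
proof (rule ccontr)
  assume "a \<noteq> 0" hence a: "a > 0" using assms by simp
  define t where "t = - a / (\<bar>d\<bar> + 1)"
  have h: "0 \<le> 2*t*a + t^2*d" using assms by simp
  have "t^2 * d \<le> t^2 * \<bar>d\<bar>" by (simp add: mult_left_mono)
  also have "\<dots> = a^2 * \<bar>d\<bar> / (\<bar>d\<bar>+1)^2" by (simp add: t_def power_divide)
  also have "\<dots> \<le> a^2 / (\<bar>d\<bar>+1)"
  proof -
    have "a^2 * \<bar>d\<bar> \<le> a^2 * (\<bar>d\<bar>+1)" by (intro mult_left_mono) auto
    hence "a^2 * \<bar>d\<bar> / (\<bar>d\<bar>+1)^2 \<le> a^2 * (\<bar>d\<bar>+1) / (\<bar>d\<bar>+1)^2"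
      by (simp add: divide_right_mono)
    also have "\<dots> = a^2 / (\<bar>d\<bar>+1)" by (simp add: power2_eq_square)
    finally show ?thesis .
  qed
  finally have "0 \<le> 2*t*a + a^2 / (\<bar>d\<bar>+1)" using h by linarith
  moreover have "2*t*a = - 2 * a^2 / (\<bar>d\<bar>+1)" by (simp add: t_def power2_eq_square)
  ultimately have "0 \<le> -(a^2 / (\<bar>d\<bar>+1))" by simp
  moreover have "a^2 / (\<bar>d\<bar>+1) > 0" using a by simp
  ultimately show False by linarith
qed


lemma quad_scale:
  fixes M :: "real^'n^'n"
  shows "(c *\<^sub>R x) \<bullet> (M *v (c *\<^sub>R x)) = c^2 * (x \<bullet> (M *v x))"
  by (simp add: matrix_vector_mult_scaleR power2_eq_square)

lemma spectral_sub:
  fixes M :: "real^'n^'n"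
  assumes sym: "transpose M = M"
  shows "subspace W \<Longrightarrow> (\<forall>x\<in>W. M *v x \<in> W) \<Longrightarrow>
    \<exists>B. B \<subseteq> W \<and> pairwise orthogonal B \<and> (\<forall>b\<in>B. norm b = 1 \<and> M *v b = (b \<bullet> (M *v b)) *\<^sub>R b) \<and> span B = W"
proof (induction "dim W" arbitrary: W rule: less_induct)
  case less
  show ?case
  proof (cases "W = {0}")
    case True
    then show ?thesis by (intro exI[of _ "{}"]) auto
  next
    case False
    then obtain w where w: "w \<in> W" "w \<noteq> 0" using less.prems subspace_0 by blast
    define K where "K = W \<inter> sphere 0 1"
    have "compact K" unfolding K_def
      by (intro closed_Int_compact closed_subspace less.prems compact_sphere)
    moreover have "(1 / norm w) *\<^sub>R w \<in> K" using w less.prems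
      by (simp add: K_def subspace_scale)
    hence "K \<noteq> {}" by blast
    moreover have "continuous_on K (\<lambda>x. x \<bullet> (M *v x))"
      by (intro continuous_intros linear_continuous_on bounded_linear.linear) auto
    ultimately obtain v where v: "v \<in> K" and vmin: "\<forall>y\<in>K. v \<bullet> (M *v v) \<le> y \<bullet> (M *v y)"
      using continuous_attains_inf by blast
    define lam where "lam = v \<bullet> (M *v v)"
    have vW: "v \<in> W" and vn: "norm v = 1" using v by (auto simp: K_def)
    have vv: "v \<bullet> v = 1" using vn by (simp add: dot_square_norm)
    have ge: "lam * (norm y)^2 \<le> y \<bullet> (M *v y)" if "y \<in> W" for y
    proof (cases "y = 0")
      case True then show ?thesis by simp
    next
      case False
      have "(1 / norm y) *\<^sub>R y \<in> K" using that False less.prems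
        by (simp add: K_def subspace_scale)
      hence "lam \<le> ((1 / norm y) *\<^sub>R y) \<bullet> (M *v ((1 / norm y) *\<^sub>R y))"
        using vmin lam_def by blast
      also have "\<dots> = (y \<bullet> (M *v y)) / (norm y)^2" unfolding quad_scale by (simp add: power_divide)
      finally show ?thesis using False by (simp add: field_simps)
    qed
    define r where "r = M *v v - lam *\<^sub>R v"
    have rW: "r \<in> W" unfolding r_def using less.prems vW
      by (simp add: subspace_diff subspace_scale)
    have vr: "v \<bullet> r = 0" by (simp add: r_def inner_diff_right lam_def vv)
    have rMv: "r \<bullet> (M *v v) = r \<bullet> r"
    proof -
      have "M *v v = r + lam *\<^sub>R v" by (simp add: r_def)
      hence "r \<bullet> (M *v v) = r \<bullet> r + lam * (r \<bullet> v)" by (simp add: inner_add_right)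
      thus ?thesis using vr by (simp add: inner_commute)
    qed
    have "\<forall>t. 0 \<le> 2*t*(r \<bullet> r) + t^2*(r \<bullet> (M *v r) - lam * (r \<bullet> r))"
    proof
      fix t :: real
      have yW: "v + t *\<^sub>R r \<in> W" using vW rW less.prems by (simp add: subspace_add subspace_scale)
      have n: "(norm (v + t *\<^sub>R r))^2 = 1 + t^2 * (r \<bullet> r)"
        unfolding power2_norm_eq_inner by (simp add: inner_add_left inner_add_right vv vr inner_commute[of r v] power2_eq_square)
      have q: "(v + t *\<^sub>R r) \<bullet> (M *v (v + t *\<^sub>R r)) = lam + 2*t*(r \<bullet> r) + t^2 * (r \<bullet> (M *v r))"
      proof -
        have "v \<bullet> (M *v r) = r \<bullet> (M *v v)" using sym_dot[OF sym, of v r] by (simp add: inner_commute)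
        thus ?thesis
          by (simp add: matrix_vector_right_distrib matrix_vector_mult_scaleR inner_add_left inner_add_right
              lam_def rMv power2_eq_square algebra_simps)
      qed
      show "0 \<le> 2*t*(r \<bullet> r) + t^2*(r \<bullet> (M *v r) - lam * (r \<bullet> r))"
        using ge[OF yW] n q by (simp add: algebra_simps)
    qed
    hence "r \<bullet> r = 0" by (intro quad_zero_lemma) auto
    hence eig: "M *v v = lam *\<^sub>R v" by (simp add: r_def)
    define W' where "W' = {x\<in>W. v \<bullet> x = 0}"
    have sW': "subspace W'" using less.prems(1) unfolding W'_def subspace_def
      by (auto simp: inner_add_right)
    have invW': "\<forall>x\<in>W'. M *v x \<in> W'"
    proof
      fix x assume "x \<in> W'"
      hence "x \<in> W" "v \<bullet> x = 0" by (auto simp: W'_def)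
      moreover have "v \<bullet> (M *v x) = (M *v v) \<bullet> x" using sym_dot[OF sym] by simp
      ultimately show "M *v x \<in> W'" using less.prems(2) eig by (simp add: W'_def)
    qed
    have "v \<notin> W'" using vv by (simp add: W'_def)
    moreover have "W' \<subseteq> W" by (auto simp: W'_def)
    ultimately have "W' \<subset> W" using vW by blast
    hence "dim W' < dim W"
    proof -
      have e1: "span W' = W'" using sW' by (simp add: span_eq_iff)
      have e2: "span W = W" using less.prems(1) by (simp add: span_eq_iff)
      show ?thesis using dim_psubset[of W' W] \<open>W' \<subset> W\<close> unfolding e1 e2 by blast
    qed
    then obtain B' where B': "B' \<subseteq> W'" "pairwise orthogonal B'"
      "\<forall>b\<in>B'. norm b = 1 \<and> M *v b = (b \<bullet> (M *v b)) *\<^sub>R b" "span B' = W'"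
      using less.hyps[OF _ sW' invW'] by blast
    show ?thesis
    proof (intro exI[of _ "insert v B'"] conjI)
      show "insert v B' \<subseteq> W" using vW B'(1) by (auto simp: W'_def)
      show "pairwise orthogonal (insert v B')"
        using B'(1,2) by (auto simp: pairwise_insert W'_def orthogonal_def inner_commute)
      show "\<forall>b\<in>insert v B'. norm b = 1 \<and> M *v b = (b \<bullet> (M *v b)) *\<^sub>R b"
        using B'(3) vn eig lam_def by auto
      show "span (insert v B') = W"
      proof
        show "span (insert v B') \<subseteq> W"
          using \<open>insert v B' \<subseteq> W\<close> less.prems(1) by (simp add: span_minimal)
        show "W \<subseteq> span (insert v B')"
        proof
          fix x assume xW: "x \<in> W"
          have "x - (v \<bullet> x) *\<^sub>R v \<in> W'"
            using xW vW less.prems(1) vv by (simp add: W'_def subspace_diff subspace_scale inner_diff_right)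
          thus "x \<in> span (insert v B')" using B'(4) span_breakdown_eq by blast
        qed
      qed
    qed
  qed
qed

lemma mv_sum: "(M::real^'n^'m) *v (\<Sum>b\<in>B. f b) = (\<Sum>b\<in>B. M *v f b)"
  by (simp add: linear_sum[OF matrix_vector_mul_linear])

lemma spectral:
  fixes M :: "real^'n^'n" assumes sym: "transpose M = M"
  obtains B where "finite B" "pairwise orthogonal B" "\<And>b. b\<in>B \<Longrightarrow> norm b = 1"
    "\<And>b. b\<in>B \<Longrightarrow> M *v b = (b \<bullet> (M *v b)) *\<^sub>R b" "\<And>x. x = (\<Sum>b\<in>B. (b \<bullet> x) *\<^sub>R b)"
proof -
  obtain B where B: "pairwise orthogonal B" "\<forall>b\<in>B. norm b = 1 \<and> M *v b = (b \<bullet> (M *v b)) *\<^sub>R b"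
    "span B = UNIV"
    using spectral_sub[OF sym, of UNIV] by auto
  have "0 \<notin> B" using B(2) by force
  hence fin: "finite B" using B(1) pairwise_orthogonal_independent independent_imp_finite by blast
  have cb: "c \<bullet> (\<Sum>b\<in>B. (b \<bullet> x) *\<^sub>R b) = c \<bullet> x" if "c \<in> B" for c x
  proof -
    have "c \<bullet> (\<Sum>b\<in>B. (b \<bullet> x) *\<^sub>R b) = (\<Sum>b\<in>B. (b \<bullet> x) * (c \<bullet> b))"
      by (simp add: inner_sum_right)
    also have "\<dots> = (c \<bullet> x) * (c \<bullet> c)"
    proof (subst sum.remove[OF fin that], rule trans[OF _ add_0_right], rule arg_cong2[where f="(+)"])
      show "(\<Sum>b\<in>B - {c}. (b \<bullet> x) * (c \<bullet> b)) = 0"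
        using B(1) that by (intro sum.neutral) (auto simp: pairwise_def orthogonal_def)
    qed simp
    also have "c \<bullet> c = 1" using B(2) that by (simp add: dot_square_norm)
    finally show ?thesis by simp
  qed
  have ex: "x = (\<Sum>b\<in>B. (b \<bullet> x) *\<^sub>R b)" for x
  proof -
    define y where "y = x - (\<Sum>b\<in>B. (b \<bullet> x) *\<^sub>R b)"
    have "orthogonal y c" if "c \<in> B" for c
    proof -
      have "c \<bullet> y = 0" unfolding y_def inner_diff_right cb[OF that] by simp
      thus ?thesis by (simp add: orthogonal_def inner_commute)
    qed
    hence "orthogonal y y" using B(3) orthogonal_to_span[of y B y] by auto
    hence "y = 0" by (simp add: orthogonal_def)
    thus ?thesis by (simp add: y_def)
  qed
  show ?thesis using that fin B ex by blast
qed

lemma parseval: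
  assumes "\<And>x. x = (\<Sum>b\<in>B. (b \<bullet> x) *\<^sub>R b)"
  shows "x \<bullet> y = (\<Sum>b\<in>B. (b \<bullet> x) * (b \<bullet> y))"
proof -
  have "x \<bullet> y = (\<Sum>b\<in>B. (b \<bullet> x) *\<^sub>R b) \<bullet> y" using assms by metis
  also have "\<dots> = (\<Sum>b\<in>B. (b \<bullet> x) * (b \<bullet> y))" by (simp add: inner_sum_left)
  finally show ?thesis .
qed

lemma outer_mv:
  fixes B :: "(real^'n) set"
  shows "(\<chi> i j. \<Sum>b\<in>B. c b * b$i * b$j) *v x = (\<Sum>b\<in>B. (c b * (b \<bullet> x)) *\<^sub>R b)"
  by (simp add: vec_eq_iff matrix_vector_mult_def inner_vec_def sum_component sum_distrib_left
      sum_distrib_right sum.swap[of _ B] mult_ac)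

lemma orth_coef:
  assumes fin: "finite B" and orth: "pairwise orthogonal B" and nb: "\<And>b. b\<in>B \<Longrightarrow> norm b = 1"
    and c: "c \<in> B"
  shows "c \<bullet> (\<Sum>b\<in>B. f b *\<^sub>R b) = f c"
proof -
  have "c \<bullet> (\<Sum>b\<in>B. f b *\<^sub>R b) = (\<Sum>b\<in>B. f b * (c \<bullet> b))"
    by (simp add: inner_sum_right)
  also have "\<dots> = f c * (c \<bullet> c)"
  proof (subst sum.remove[OF fin c], rule trans[OF _ add_0_right], rule arg_cong2[where f="(+)"])
    show "(\<Sum>b\<in>B - {c}. f b * (c \<bullet> b)) = 0"
      using orth c by (intro sum.neutral) (auto simp: pairwise_def orthogonal_def)
  qed simp
  also have "c \<bullet> c = 1" using nb[OF c] by (simp add: dot_square_norm)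
  finally show ?thesis by simp
qed

lemma exists_vec_nonzero: "\<exists>x::real^'n. x \<noteq> 0"
  by (rule exI[of _ "axis undefined 1"]) (simp add: axis_eq_0_iff)

lemma lambda_min_facts:
  fixes P :: "real^'n^'n" assumes pd: "sym_pos_def P"
  shows "lambda_min P > 0 \<and> (\<forall>x. lambda_min P * (norm x)^2 \<le> x \<bullet> (P *v x))"
proof -
  have sym: "transpose P = P" and pos: "\<And>x. x \<noteq> 0 \<Longrightarrow> x \<bullet> (P *v x) > 0"
    using pd by (auto simp: sym_pos_def_def)
  obtain B where fin: "finite B" and orth: "pairwise orthogonal B" and nb: "\<And>b. b\<in>B \<Longrightarrow> norm b = 1"
    and eig: "\<And>b. b\<in>B \<Longrightarrow> P *v b = (b \<bullet> (P *v b)) *\<^sub>R b" and ex: "\<And>x. x = (\<Sum>b\<in>B. (b \<bullet> x) *\<^sub>R b)"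
    by (rule spectral[OF sym]) blast
  define l where "l b = b \<bullet> (P *v b)" for b
  have bnz: "b \<noteq> 0" if "b \<in> B" for b using nb[OF that] by auto
  have eigl: "P *v b = l b *\<^sub>R b" if "b \<in> B" for b
    using eig[OF that] unfolding l_def[symmetric] .
  have lpos: "l b > 0" if "b \<in> B" for b using pos[OF bnz[OF that]] by (simp add: l_def)
  define E where "E = {l. \<exists>v. v \<noteq> 0 \<and> P *v v = l *\<^sub>R v}"
  have E_eq: "E = l ` B"
  proof
    show "l ` B \<subseteq> E" using bnz eigl unfolding E_def by blast
    show "E \<subseteq> l ` B"
    proof
      fix mu assume "mu \<in> E"
      then obtain v where v: "v \<noteq> 0" "P *v v = mu *\<^sub>R v" by (auto simp: E_def)
      have "\<exists>b\<in>B. b \<bullet> v \<noteq> 0"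
      proof (rule ccontr)
        assume "\<not> ?thesis"
        hence "(\<Sum>b\<in>B. (b \<bullet> v) *\<^sub>R b) = 0" by simp
        with ex[of v] v(1) show False by metis
      qed
      then obtain b where b: "b \<in> B" "b \<bullet> v \<noteq> 0" by blast
      have "b \<bullet> (P *v v) = (P *v b) \<bullet> v" using sym_dot[OF sym] by simp
      hence "mu * (b \<bullet> v) = l b * (b \<bullet> v)" using v(2) eigl[OF b(1)] by simp
      hence "mu = l b" using b(2) by simp
      thus "mu \<in> l ` B" using b(1) by blast
    qed
  qed
  have "B \<noteq> {}"
  proof
    assume "B = {}"
    have "\<And>x::real^'n. x = 0"
    proof -
      fix x :: "real^'n"
      have "x = (\<Sum>b\<in>B. (b \<bullet> x) *\<^sub>R b)" by (rule ex)
      thus "x = 0" using \<open>B = {}\<close> by simp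
    qed
    thus False using exists_vec_nonzero by blast
  qed
  hence finE: "finite E" "E \<noteq> {}" using fin E_eq by auto
  hence "Min E \<in> E" by simp
  hence Mpos: "Min E > 0" using E_eq lpos by auto
  have Mle: "Min E \<le> l b" if "b \<in> B" for b using finE E_eq that by auto
  have "lambda_min P * (norm x)^2 \<le> x \<bullet> (P *v x)" for x
  proof -
    have "x \<bullet> (P *v x) = (\<Sum>b\<in>B. (b \<bullet> x) * (b \<bullet> (P *v x)))" by (rule parseval[OF ex])
    also have "\<dots> = (\<Sum>b\<in>B. l b * (b \<bullet> x)^2)"
    proof (rule sum.cong[OF refl])
      fix b assume b: "b \<in> B"
      have "b \<bullet> (P *v x) = (P *v b) \<bullet> x" using sym_dot[OF sym] by simp
      also have "\<dots> = l b * (b \<bullet> x)" using eigl[OF b] by simp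
      finally show "(b \<bullet> x) * (b \<bullet> (P *v x)) = l b * (b \<bullet> x)^2" by (simp add: power2_eq_square)
    qed
    also have "\<dots> \<ge> (\<Sum>b\<in>B. Min E * (b \<bullet> x)^2)"
      by (intro sum_mono mult_right_mono Mle) auto
    also have "(\<Sum>b\<in>B. Min E * (b \<bullet> x)^2) = Min E * (x \<bullet> x)"
      by (simp add: parseval[OF ex, of x x] sum_distrib_left power2_eq_square)
    finally show ?thesis by (simp add: lambda_min_def E_def[symmetric] power2_norm_eq_inner)
  qed
  thus ?thesis using Mpos by (simp add: lambda_min_def E_def)
qed

lemma mat_sqrt_facts:
  fixes P :: "real^'n^'n" assumes pd: "sym_pos_def P"
  shows "sym_pos_def (mat_sqrt P) \<and> mat_sqrt P ** mat_sqrt P = P"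
proof -
  have sym: "transpose P = P" and pos: "\<And>x. x \<noteq> 0 \<Longrightarrow> x \<bullet> (P *v x) > 0"
    using pd by (auto simp: sym_pos_def_def)
  obtain B where fin: "finite B" and orth: "pairwise orthogonal B" and nb: "\<And>b. b\<in>B \<Longrightarrow> norm b = 1"
    and eig: "\<And>b. b\<in>B \<Longrightarrow> P *v b = (b \<bullet> (P *v b)) *\<^sub>R b" and ex: "\<And>x. x = (\<Sum>b\<in>B. (b \<bullet> x) *\<^sub>R b)"
    by (rule spectral[OF sym]) blast
  define l where "l b = b \<bullet> (P *v b)" for b
  have bnz: "b \<noteq> 0" if "b \<in> B" for b using nb[OF that] by auto
  have eigl: "P *v b = l b *\<^sub>R b" if "b \<in> B" for b
    using eig[OF that] unfolding l_def[symmetric] .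
  have lpos: "l b > 0" if "b \<in> B" for b using pos[OF bnz[OF that]] by (simp add: l_def)
  have coef: "\<And>c f. c \<in> B \<Longrightarrow> c \<bullet> (\<Sum>b\<in>B. f b *\<^sub>R b) = f c"
    by (rule orth_coef[OF fin orth]) (auto intro: nb)
  define S :: "real^'n^'n" where "S = (\<chi> i j. \<Sum>b\<in>B. sqrt (l b) * b$i * b$j)"
  have Sx: "S *v x = (\<Sum>b\<in>B. (sqrt (l b) * (b \<bullet> x)) *\<^sub>R b)" for x
    unfolding S_def by (rule outer_mv)
  have Ssym: "transpose S = S" by (simp add: S_def transpose_def vec_eq_iff mult_ac)
  have Spos: "x \<bullet> (S *v x) > 0" if "x \<noteq> 0" for x
  proof -
    have "\<exists>b\<in>B. b \<bullet> x \<noteq> 0"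
    proof (rule ccontr)
      assume "\<not> ?thesis"
      hence "(\<Sum>b\<in>B. (b \<bullet> x) *\<^sub>R b) = 0" by simp
      with ex[of x] that show False by argo
    qed
    then obtain c where c: "c \<in> B" "c \<bullet> x \<noteq> 0" by blast
    have "x \<bullet> (S *v x) = (\<Sum>b\<in>B. sqrt (l b) * (b \<bullet> x)^2)"
      by (simp add: Sx inner_sum_right power2_eq_square inner_commute mult_ac)
    also have "\<dots> > 0"
    proof (rule sum_pos2[OF fin c(1)])
      show "0 < sqrt (l c) * (c \<bullet> x)^2" using c lpos[OF c(1)] by simp
      fix i assume "i \<in> B"
      hence "l i \<ge> 0" using lpos[of i] by simp
      thus "0 \<le> sqrt (l i) * (i \<bullet> x)^2" by simp
    qed
    finally show ?thesis .
  qed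
  have SS: "S ** S = P"
  proof (subst matrix_eq, intro allI)
    fix x
    have "(S ** S) *v x = S *v (S *v x)" by (simp add: matrix_vector_mul_assoc)
    also have "\<dots> = (\<Sum>b\<in>B. (sqrt (l b) * (b \<bullet> (S *v x))) *\<^sub>R b)" by (rule Sx)
    also have "\<dots> = (\<Sum>b\<in>B. (b \<bullet> x) *\<^sub>R (P *v b))"
    proof (rule sum.cong[OF refl])
      fix b assume b: "b \<in> B"
      have "b \<bullet> (S *v x) = sqrt (l b) * (b \<bullet> x)" unfolding Sx by (rule coef[OF b])
      hence "sqrt (l b) * (b \<bullet> (S *v x)) = l b * (b \<bullet> x)"
        using lpos[OF b] by (simp add: mult.assoc[symmetric])
      thus "(sqrt (l b) * (b \<bullet> (S *v x))) *\<^sub>R b = (b \<bullet> x) *\<^sub>R (P *v b)"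
        using eigl[OF b] by simp
    qed
    also have "\<dots> = P *v (\<Sum>b\<in>B. (b \<bullet> x) *\<^sub>R b)" by (simp add: mv_sum matrix_vector_mult_scaleR)
    also have "\<dots> = P *v x" by (rule arg_cong[OF ex[of x], of "\<lambda>v. P *v v", symmetric])
    finally show "(S ** S) *v x = P *v x" .
  qed
  have Spd: "sym_pos_def S" using Ssym Spos by (simp add: sym_pos_def_def)
  have uniq: "T = S" if T: "sym_pos_def T \<and> T ** T = P" for T
  proof -
    have Tsym: "transpose T = T" and Tpos: "\<And>x. x \<noteq> 0 \<Longrightarrow> x \<bullet> (T *v x) > 0"
      using T by (auto simp: sym_pos_def_def)
    have Tb: "T *v b = sqrt (l b) *\<^sub>R b" if b: "b \<in> B" for b
    proof (rule ccontr)
      define y where "y = T *v b - sqrt (l b) *\<^sub>R b"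
      assume "\<not> ?thesis"
      hence ynz: "y \<noteq> 0" by (simp add: y_def)
      have "T *v y + sqrt (l b) *\<^sub>R y = (T ** T) *v b - (sqrt (l b) * sqrt (l b)) *\<^sub>R b"
        by (simp add: y_def matrix_vector_mul_assoc[symmetric] matrix_vector_mult_diff_distrib matrix_vector_mult_scaleR algebra_simps)
      also have "\<dots> = 0" using T eigl[OF b] lpos[OF b] by simp
      finally have "T *v y = - (sqrt (l b) *\<^sub>R y)" by (simp add: eq_neg_iff_add_eq_0)
      hence "y \<bullet> (T *v y) = - sqrt (l b) * (y \<bullet> y)" by simp
      also have "\<dots> \<le> 0" using lpos[OF b] by simp
      finally show False using Tpos[OF ynz] by simp
    qed
    show ?thesis
    proof (subst matrix_eq, intro allI)
      fix x
      have "T *v x = T *v (\<Sum>b\<in>B. (b \<bullet> x) *\<^sub>R b)" by (rule arg_cong[OF ex])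
      also have "\<dots> = (\<Sum>b\<in>B. (sqrt (l b) * (b \<bullet> x)) *\<^sub>R b)"
        by (simp add: mv_sum matrix_vector_mult_scaleR Tb mult.commute)
      also have "\<dots> = S *v x" by (simp add: Sx)
      finally show "T *v x = S *v x" .
    qed
  qed
  have "mat_sqrt P = S" unfolding mat_sqrt_def
  proof (rule the_equality)
    show "sym_pos_def S \<and> S ** S = P" using Spd SS by simp
    fix T assume "sym_pos_def T \<and> T ** T = P" thus "T = S" by (rule uniq)
  qed
  thus ?thesis using Spd SS by simp
qed

lemma inv_props:
  fixes M :: "real^'n^'n"
  assumes "invertible M"
  shows "matrix_inv M ** M = mat 1 \<and> M ** matrix_inv M = mat 1"
proof -
  have "\<exists>M'. M ** M' = mat 1 \<and> M' ** M = mat 1" using assms by (simp add: invertible_def)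
  hence "M ** matrix_inv M = mat 1 \<and> matrix_inv M ** M = mat 1"
    unfolding matrix_inv_def by (rule someI_ex)
  thus ?thesis by simp
qed

lemma inj_invertible:
  fixes M :: "real^'n^'n"
  assumes "\<And>x. M *v x = 0 \<Longrightarrow> x = 0"
  shows "invertible M"
proof -
  have "inj ((*v) M)"
    by (rule injI) (metis assms eq_iff_diff_eq_0 matrix_vector_mult_diff_distrib)
  hence "\<exists>B. B ** M = mat 1" using matrix_left_invertible_injective by blast
  thus ?thesis using invertible_left_inverse by blast
qed

lemma transpose_dot: "(transpose (K::real^'a^'b) *v y) \<bullet> z = y \<bullet> (K *v z)"
  by (simp add: dot_lmul_matrix)

lemma quad_transpose: "z \<bullet> (transpose (M::real^'n^'n) *v z) = z \<bullet> (M *v z)"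
  by (metis dot_lmul_matrix inner_commute transpose_matrix_vector)

lemma pinv_right:
  fixes K :: "real^'t^'m"
  assumes "full_row_rank K"
  shows "K ** right_pinv K = mat 1"
proof -
  have "rank (transpose K) = CARD('m)" using assms by (simp add: full_row_rank_def rank_transpose)
  hence injT: "inj ((*v) (transpose K))" by (simp add: full_rank_injective)
  have "invertible (K ** transpose K)"
  proof (rule inj_invertible)
    fix y assume "(K ** transpose K) *v y = 0"
    hence "K *v (transpose K *v y) = 0" by (metis matrix_vector_mul_assoc)
    hence "(transpose K *v y) \<bullet> (transpose K *v y) = 0"
      by (metis transpose_dot inner_zero_right)
    hence "transpose K *v y = transpose K *v 0" by (metis inner_eq_zero_iff matrix_vector_mult_0_right)
    thus "y = 0" using injT by (metis injD)
  qed
  hence "(K ** transpose K) ** matrix_inv (K ** transpose K) = mat 1" using inv_props by blast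
  thus ?thesis by (simp add: right_pinv_def matrix_mul_assoc)
qed

lemma young_ineq:
  fixes a b :: "'a::real_inner"
  assumes "e > 0"
  shows "2 * (a \<bullet> b) \<le> e * (a \<bullet> a) + (b \<bullet> b) / e"
proof -
  have "0 \<le> (e *\<^sub>R a - b) \<bullet> (e *\<^sub>R a - b)" by simp
  also have "\<dots> = e^2 * (a \<bullet> a) - 2 * e * (a \<bullet> b) + b \<bullet> b"
    by (simp add: inner_diff_left inner_diff_right inner_commute power2_eq_square algebra_simps)
  finally have "2 * e * (a \<bullet> b) \<le> e * (e * (a \<bullet> a) + (b \<bullet> b) / e)"
    using assms by (simp add: power2_eq_square algebra_simps)
  hence "e * (2 * (a \<bullet> b)) \<le> e * (e * (a \<bullet> a) + (b \<bullet> b) / e)" by (simp add: mult_ac)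
  thus ?thesis using assms by (simp add: mult_le_cancel_left_pos)
qed

theorem theorem2:
  fixes A :: "real^'n^'n" and B :: "real^'m^'n"
    and U0 :: "real^'t^'m" and X0 X1 Xb0 Xb1 :: "real^'t^'n"
    and Qb H :: "real^'n^'t"
    and P :: "real^'n^'n"
    and Ah :: "real^'k^'k" and Xi :: "real^'k^'m" and Theta :: "real^'k^'n"
    and Bh :: "real^'l^'k" and Psi :: "real^'l^'m"
    and X :: "(real^'n) set" and Xh :: "(real^'k) set" and Uh :: "(real^'l) set"
    and kh eps :: real
  defines "Q \<equiv> H ** P"
  defines "Bd \<equiv> (X1 ** Q - Xb1 ** Qb) ** right_pinv (U0 ** Q)"
  defines "V \<equiv> (\<lambda>(x::real^'n, xh::real^'k). (x - Theta *v xh) \<bullet> (P *v (x - Theta *v xh)))"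
  defines "Ch \<equiv> Theta"
  defines "alpha \<equiv> lambda_min P"
  defines "kappa \<equiv> kh - eps"
  defines "rho \<equiv> (1 / eps) * (mat_norm (mat_sqrt P ** (Bd ** Psi - Theta ** Bh)))\<^sup>2"
  assumes data1: "X1 = A ** X0 + B ** U0"
    and data2: "Xb1 = A ** Xb0"
    and rk0: "full_row_rank X0" and rkb0: "full_row_rank Xb0"
    and Qb: "Xb0 ** Qb = mat 1"
    and kh_pos: "kh > 0"
    and P_pd: "sym_pos_def P"
    and cond1: "X0 ** H = matrix_inv P"
    and cond2a: "full_row_rank (U0 ** Q)"
    and cond2b: "Xb1 ** Qb ** Theta = Theta ** Ah - Bd ** Xi"
    and cond3: "loewner_le (transpose H ** transpose X1 + X1 ** H) (- kh *\<^sub>R (X0 ** H))"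
    and eps: "0 < eps" "eps < kh"
  shows "alpha > 0 \<and> kappa > 0
    \<and> (\<forall>x\<in>X. \<forall>xh\<in>Xh. alpha * (norm (x - Ch *v xh))\<^sup>2 \<le> V (x, xh))
    \<and> (\<forall>x\<in>X. \<forall>xh\<in>Xh. \<forall>uh\<in>Uh.
         let u = (U0 ** Q) *v (x - Theta *v xh) + Xi *v xh + Psi *v uh in
         \<exists>D. (V has_derivative D) (at (x, xh))
           \<and> D (A *v x + B *v u, Ah *v xh + Bh *v uh) \<le> - kappa * V (x, xh) + rho * (norm uh)\<^sup>2)"
proof -
  have sym: "transpose P = P" and Ppos: "\<And>x. x \<noteq> 0 \<Longrightarrow> x \<bullet> (P *v x) > 0"
    using P_pd by (auto simp: sym_pos_def_def)
  have lam: "alpha > 0 \<and> (\<forall>x. alpha * (norm x)^2 \<le> x \<bullet> (P *v x))"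
    unfolding alpha_def by (rule lambda_min_facts[OF P_pd])
  define S where "S = mat_sqrt P"
  have Sfacts: "sym_pos_def S \<and> S ** S = P" unfolding S_def by (rule mat_sqrt_facts[OF P_pd])
  have Ssym: "transpose S = S" using Sfacts by (simp add: sym_pos_def_def)
  have SS: "S *v (S *v v) = P *v v" for v using Sfacts by (simp add: matrix_vector_mul_assoc)
  have Pinv: "invertible P"
  proof (rule inj_invertible)
    fix x assume "P *v x = 0"
    thus "x = 0" using Ppos[of x] by (cases "x = 0") auto
  qed
  have PinvP: "matrix_inv P *v (P *v v) = v" for v
    using inv_props[OF Pinv] by (simp add: matrix_vector_mul_assoc)
  define K where "K = U0 ** Q"
  have KR: "K *v (right_pinv K *v y) = y" for y
    using pinv_right[OF cond2a[folded K_def]] by (simp add: matrix_vector_mul_assoc)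
  have X0Q: "X0 *v (Q *v w) = w" for w
  proof -
    have "X0 *v (Q *v w) = (X0 ** H) *v (P *v w)" by (simp add: Q_def matrix_vector_mul_assoc matrix_mul_assoc)
    also have "\<dots> = w" by (simp add: cond1 PinvP)
    finally show ?thesis .
  qed
  have X1Q: "X1 *v (Q *v w) = A *v w + B *v (K *v w)" for w
    by (simp add: data1 matrix_vector_mult_add_rdistrib X0Q K_def matrix_vector_mul_assoc[symmetric])
  have Xb1Qb: "Xb1 *v (Qb *v w) = A *v w" for w
  proof -
    have "Xb1 *v (Qb *v w) = A *v ((Xb0 ** Qb) *v w)" by (simp add: data2 matrix_vector_mul_assoc matrix_mul_assoc)
    thus ?thesis by (simp add: Qb)
  qed
  have BdB: "Bd = B"
  proof (subst matrix_eq, intro allI)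
    fix y
    define w where "w = right_pinv K *v y"
    have "Bd *v y = (X1 ** Q - Xb1 ** Qb) *v w"
      by (simp add: Bd_def w_def K_def matrix_vector_mul_assoc)
    also have "\<dots> = B *v (K *v w)"
      by (simp add: matrix_vector_mult_diff_rdistrib matrix_vector_mul_assoc[symmetric] X1Q Xb1Qb)
    also have "\<dots> = B *v y" by (simp add: w_def KR)
    finally show "Bd *v y = B *v y" .
  qed
  have ThAh: "Theta *v (Ah *v v) = A *v (Theta *v v) + B *v (Xi *v v)" for v
  proof -
    have "Theta ** Ah = Xb1 ** Qb ** Theta + Bd ** Xi" using cond2b by simp
    hence "Theta *v (Ah *v v) = Xb1 *v (Qb *v (Theta *v v)) + Bd *v (Xi *v v)"
      by (simp add: matrix_vector_mul_assoc matrix_vector_mult_add_rdistrib matrix_mul_assoc)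
    thus ?thesis by (simp add: Xb1Qb BdB)
  qed
  define W where "W = Bd ** Psi - Theta ** Bh"
  define mn where "mn = mat_norm (S ** W)"
  have rho_eq: "rho = (1/eps) * mn^2" by (simp add: rho_def mn_def S_def W_def)
  have part1: "\<forall>x\<in>X. \<forall>xh\<in>Xh. alpha * (norm (x - Ch *v xh))\<^sup>2 \<le> V (x, xh)"
    using lam by (simp add: V_def Ch_def)
  have part2: "\<forall>x\<in>X. \<forall>xh\<in>Xh. \<forall>uh\<in>Uh.
         let u = (U0 ** Q) *v (x - Theta *v xh) + Xi *v xh + Psi *v uh in
         \<exists>D. (V has_derivative D) (at (x, xh))
           \<and> D (A *v x + B *v u, Ah *v xh + Bh *v uh) \<le> - kappa * V (x, xh) + rho * (norm uh)\<^sup>2"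
  proof (intro ballI, unfold Let_def)
    fix x xh uh
    define e where "e = x - Theta *v xh"
    define u where "u = K *v e + Xi *v xh + Psi *v uh"
    define g where "g = (\<lambda>z::((real^'n) \<times> (real^'k)). fst z - Theta *v snd z)"
    have gl: "bounded_linear g" unfolding g_def
      by (intro bounded_linear_sub bounded_linear_fst
          bounded_linear_compose[OF matrix_vector_mul_bounded_linear bounded_linear_snd])
    have Pgl: "bounded_linear (\<lambda>z. P *v g z)"
      by (rule bounded_linear_compose[OF matrix_vector_mul_bounded_linear gl])
    have Veq: "V = (\<lambda>z. g z \<bullet> (P *v g z))" by (auto simp: V_def g_def)
    define D where "D = (\<lambda>h. g (x, xh) \<bullet> (P *v g h) + g h \<bullet> (P *v g (x, xh)))"
    have hasD: "(V has_derivative D) (at (x, xh))"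
      unfolding Veq D_def
      by (rule has_derivative_inner[OF bounded_linear_imp_has_derivative[OF gl]
            bounded_linear_imp_has_derivative[OF Pgl]])
    define de where "de = (A *v x + B *v u) - Theta *v (Ah *v xh + Bh *v uh)"
    have gd: "g (A *v x + B *v u, Ah *v xh + Bh *v uh) = de" by (simp add: g_def de_def)
    have ge: "g (x, xh) = e" by (simp add: g_def e_def)
    have de_eq: "de = X1 *v (Q *v e) + W *v uh"
      by (simp add: de_def X1Q u_def W_def BdB ThAh matrix_vector_right_distrib
          matrix_vector_mult_diff_rdistrib matrix_vector_mul_assoc[symmetric] e_def algebra_simps)
    have Vxe: "V (x, xh) = e \<bullet> (P *v e)" by (simp add: V_def e_def)
    define z where "z = P *v e"
    have Dval: "D (A *v x + B *v u, Ah *v xh + Bh *v uh) = 2 * (z \<bullet> (X1 *v (H *v z))) + 2 * (z \<bullet> (W *v uh))"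
    proof -
      have "D (A *v x + B *v u, Ah *v xh + Bh *v uh) = e \<bullet> (P *v de) + de \<bullet> (P *v e)"
        by (simp add: D_def gd ge)
      also have "e \<bullet> (P *v de) = z \<bullet> de" using sym_dot[OF sym, of e de] by (simp add: z_def)
      also have "de \<bullet> (P *v e) = z \<bullet> de" by (simp add: z_def inner_commute)
      also have "Q *v e = H *v z" by (simp add: Q_def z_def matrix_vector_mul_assoc)
      hence "z \<bullet> de = z \<bullet> (X1 *v (H *v z)) + z \<bullet> (W *v uh)" by (simp add: de_eq inner_add_right)
      finally show ?thesis by simp
    qed
    have t1: "2 * (z \<bullet> (X1 *v (H *v z))) \<le> - kh * V (x, xh)"
    proof -
      have "z \<bullet> ((transpose H ** transpose X1 + X1 ** H) *v z) \<le> z \<bullet> ((- kh *\<^sub>R (X0 ** H)) *v z)"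
        using cond3 by (simp add: loewner_le_def)
      moreover have "z \<bullet> ((transpose H ** transpose X1 + X1 ** H) *v z) = 2 * (z \<bullet> (X1 *v (H *v z)))"
      proof -
        have "transpose H ** transpose X1 = transpose (X1 ** H)" by (simp add: matrix_transpose_mul)
        hence "z \<bullet> ((transpose H ** transpose X1 + X1 ** H) *v z) = z \<bullet> (transpose (X1 ** H) *v z) + z \<bullet> ((X1 ** H) *v z)"
          by (simp add: matrix_vector_mult_add_rdistrib inner_add_right)
        also have "\<dots> = 2 * (z \<bullet> ((X1 ** H) *v z))" by (simp only: quad_transpose)
        finally show ?thesis by (simp add: matrix_vector_mul_assoc)
      qed
      moreover have "z \<bullet> ((- kh *\<^sub>R (X0 ** H)) *v z) = - kh * V (x, xh)"
      proof -
        have "(- kh *\<^sub>R (X0 ** H)) *v z = - kh *\<^sub>R ((X0 ** H) *v z)"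
          by (simp add: vec_eq_iff matrix_vector_mult_def sum_distrib_left sum_negf mult.assoc)
        also have "(X0 ** H) *v z = e" by (simp add: cond1 z_def PinvP)
        finally show ?thesis by (simp add: Vxe z_def inner_commute)
      qed
      ultimately show ?thesis by simp
    qed
    have t2: "2 * (z \<bullet> (W *v uh)) \<le> eps * V (x, xh) + rho * (norm uh)^2"
    proof -
      define a where "a = S *v e"
      define b where "b = (S ** W) *v uh"
      have "z \<bullet> (W *v uh) = a \<bullet> b"
      proof -
        have "z = S *v a" by (simp add: z_def a_def SS)
        hence "z \<bullet> (W *v uh) = a \<bullet> (S *v (W *v uh))" using sym_dot[OF Ssym, of a] by simp
        thus ?thesis by (simp add: b_def matrix_vector_mul_assoc)
      qed
      moreover have "a \<bullet> a = V (x, xh)"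
        using sym_dot[OF Ssym, of e "S *v e"] by (simp add: a_def Vxe SS)
      moreover have "b \<bullet> b \<le> mn^2 * (norm uh)^2"
      proof -
        have "norm b \<le> mn * norm uh" unfolding b_def mn_def mat_norm_def
          by (rule onorm[OF matrix_vector_mul_bounded_linear])
        hence "(norm b)^2 \<le> (mn * norm uh)^2" by (intro power_mono) auto
        thus ?thesis by (simp add: power2_norm_eq_inner power_mult_distrib)
      qed
      ultimately have "2 * (z \<bullet> (W *v uh)) \<le> eps * V (x, xh) + mn^2 * (norm uh)^2 / eps"
        using young_ineq[OF eps(1), of a b] divide_right_mono[of _ _ eps] eps(1)
        by (smt (verit) divide_right_mono)
      thus ?thesis by (simp add: rho_eq)
    qed
    have "D (A *v x + B *v u, Ah *v xh + Bh *v uh) \<le> - kappa * V (x, xh) + rho * (norm uh)\<^sup>2"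
      using Dval t1 t2 by (simp add: kappa_def algebra_simps)
    moreover have "u = (U0 ** Q) *v (x - Theta *v xh) + Xi *v xh + Psi *v uh"
      by (simp add: u_def K_def e_def)
    ultimately show "\<exists>D. (V has_derivative D) (at (x, xh))
           \<and> D (A *v x + B *v ((U0 ** Q) *v (x - Theta *v xh) + Xi *v xh + Psi *v uh), Ah *v xh + Bh *v uh)
             \<le> - kappa * V (x, xh) + rho * (norm uh)\<^sup>2"
      using hasD by metis
  qed
  show ?thesis using lam part1 part2 eps by (simp add: kappa_def)
qed

end
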